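(* For any nonzero positively oriented m-triangle $\delta$, the polar distance $r$ of its shape from the north pole (the spherical distance in the shape sphere $M^\ast\simeq S^2(1/2)$) satisfies $$\cos(2r)=4\sqrt{m_1m_2m_3}\,\frac{\Delta}{I},$$ where $\Delta$ and $I$ are the area and moment of inertia of $\delta$.
   Context: Masses $m_1,m_2,m_3>0$, $m_1+m_2+m_3=1$; m-triangle $(\mathbf a_1,\mathbf a_2,\mathbf a_3)$, $\sum m_i\mathbf a_i=0$, $I=\sum m_i|\mathbf a_i|^2$. The shape sphere $M^\ast$ is the space of oriented m-triangles with $I=1$ modulo rotation, with the kinematic metric (induced by $\sum m_i|d\mathbf a_i|^2$ through zero angular momentum lifts), isometric to a round sphere of radius $1/2$; its north pole is the shape of the positively oriented m-triangle with $m_j|\mathbf a_j|^2=(1-m_j)/2$, and the equator (at distance $\pi/4$ from it) consists of collinear shapes. *)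

theory Defs
  imports "HOL-Analysis.Analysis"
begin

text \<open>Planar triangles are triples of points in the plane, identified with complex numbers,
  indexed by 1, 2, 3 (a :: nat => complex, only a 1, a 2, a 3 matter). Masses m 1, m 2, m 3.\<close>

definition is_mtriangle :: "(nat \<Rightarrow> real) \<Rightarrow> (nat \<Rightarrow> complex) \<Rightarrow> bool" where
  "is_mtriangle m a \<longleftrightarrow> (\<Sum>i\<in>{1..3}. complex_of_real (m i) * a i) = 0"

definition inertia :: "(nat \<Rightarrow> real) \<Rightarrow> (nat \<Rightarrow> complex) \<Rightarrow> real" where
  "inertia m a = (\<Sum>i\<in>{1..3}. m i * (cmod (a i))^2)"

text \<open>Signed area (positive iff the triangle a1 a2 a3 is positively, i.e. counterclockwise, oriented).\<close>
definition signed_area :: "(nat \<Rightarrow> complex) \<Rightarrow> real" where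
  "signed_area a = Im (cnj (a 2 - a 1) * (a 3 - a 1)) / 2"

definition kin_inner :: "(nat \<Rightarrow> real) \<Rightarrow> (nat \<Rightarrow> complex) \<Rightarrow> (nat \<Rightarrow> complex) \<Rightarrow> real" where
  "kin_inner m a b = (\<Sum>i\<in>{1..3}. m i * Re (cnj (a i) * b i))"

text \<open>Great-circle distance between the normalisations (I = 1) of two nonzero configurations
  on the unit sphere of the kinematic metric.\<close>
definition config_sphere_dist :: "(nat \<Rightarrow> real) \<Rightarrow> (nat \<Rightarrow> complex) \<Rightarrow> (nat \<Rightarrow> complex) \<Rightarrow> real" where
  "config_sphere_dist m a b = arccos (kin_inner m a b / sqrt (inertia m a * inertia m b))"

text \<open>Distance in the shape sphere M* (quotient of the I = 1 sphere by rotations, with the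
  quotient of the kinematic metric): infimum over rotations of the sphere distance.\<close>
definition shape_dist :: "(nat \<Rightarrow> real) \<Rightarrow> (nat \<Rightarrow> complex) \<Rightarrow> (nat \<Rightarrow> complex) \<Rightarrow> real" where
  "shape_dist m a b = Inf ((\<lambda>u. config_sphere_dist m a (\<lambda>i. u * b i)) ` {u. cmod u = 1})"

definition is_north_pole :: "(nat \<Rightarrow> real) \<Rightarrow> (nat \<Rightarrow> complex) \<Rightarrow> bool" where
  "is_north_pole m a \<longleftrightarrow> is_mtriangle m a \<and> signed_area a > 0 \<and>
     (\<forall>j\<in>{1..3}. m j * (cmod (a j))^2 = (1 - m j) / 2)"

end

theory Submission
  imports Defs
begin

lemma sum3: "(\<Sum>i\<in>{1..3::nat}. f i) = f 1 + f 2 + f 3"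
  by (simp add: eval_nat_numeral atLeastAtMostSuc_conv add_ac)

lemma cs3: fixes a1 a2 a3 b1 b2 b3 :: real
  shows "(a1*b1+a2*b2+a3*b3)^2 \<le> (a1^2+a2^2+a3^2)*(b1^2+b2^2+b3^2)"
proof -
  have "(a1^2+a2^2+a3^2)*(b1^2+b2^2+b3^2) - (a1*b1+a2*b2+a3*b3)^2 = (a1*b2-a2*b1)^2+(a1*b3-a3*b1)^2+(a2*b3-a3*b2)^2"
    by (simp add: algebra_simps power2_eq_square)
  moreover have "(a1*b2-a2*b1)^2+(a1*b3-a3*b1)^2+(a2*b3-a3*b2)^2 \<ge> 0" by simp
  ultimately show ?thesis by linarith
qed

lemma pole:
  fixes m1 m2 m3 u1 u2 u3 w1 w2 w3 :: real
  assumes m: "m1 > 0" "m2 > 0" "m3 > 0" "m1+m2+m3 = 1"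
    and su: "m1*u1+m2*u2+m3*u3 = 0" and sv: "m1*w1+m2*w2+m3*w3 = 0"
    and n1: "m1*(u1^2+w1^2) = (1-m1)/2" and n2: "m2*(u2^2+w2^2) = (1-m2)/2"
    and n3: "m3*(u3^2+w3^2) = (1-m3)/2"
    and ar: "(u2-u1)*(w3-w1)-(w2-w1)*(u3-u1) > 0"
  shows "u1*u2+w1*w2 = -1/2" "u2*u3+w2*w3 = -1/2" "u3*u1+w3*w1 = -1/2"
    "m1*m2*(u1*w2-w1*u2) = sqrt(m1*m2*m3)/2"
    "m2*m3*(u2*w3-w2*u3) = sqrt(m1*m2*m3)/2"
    "m3*m1*(u3*w1-w3*u1) = sqrt(m1*m2*m3)/2"
proof -
  have gen: "b*c*(ub*uc+wb*wc) = -(b*c)/2"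
    if "a*ua+b*ub+c*uc = 0" "a*wa+b*wb+c*wc = 0" "a*(ua^2+wa^2) = (1-a)/2"
      "b*(ub^2+wb^2) = (1-b)/2" "c*(uc^2+wc^2) = (1-c)/2" "a+b+c=1"
    for a b c ua ub uc wa wb wc :: real
  proof -
    have h1: "a*ua = -(b*ub+c*uc)" and h2: "a*wa = -(b*wb+c*wc)" using that by linarith+
    have "(a*ua)^2 + (a*wa)^2 = (b*ub+c*uc)^2 + (b*wb+c*wc)^2" by (simp only: h1 h2 power2_minus)
    then have "a*(a*(ua^2+wa^2)) = b*(b*(ub^2+wb^2)) + c*(c*(uc^2+wc^2)) + 2*(b*c*(ub*uc+wb*wc))"
      by (simp add: algebra_simps power2_eq_square)
    then have E: "a*((1-a)/2) = b*((1-b)/2) + c*((1-c)/2) + 2*(b*c*(ub*uc+wb*wc))"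
      using that by simp
    have A: "a = 1-b-c" using that by linarith
    have "a*((1-a)/2) - b*((1-b)/2) - c*((1-c)/2) = -(b*c)" by (simp add: A field_simps)
    with E show ?thesis by linarith
  qed
  have r23: "m2*m3*(u2*u3+w2*w3) = -(m2*m3)/2"
    by (rule gen[of m1 u1 m2 u2 m3 u3 w1 w2 w3]) (use assms in auto)
  have r31: "m3*m1*(u3*u1+w3*w1) = -(m3*m1)/2"
    by (rule gen[of m2 u2 m3 u3 m1 u1 w2 w3 w1]) (use assms in \<open>auto simp: algebra_simps\<close>)
  have r12: "m1*m2*(u1*u2+w1*w2) = -(m1*m2)/2"
    by (rule gen[of m3 u3 m1 u1 m2 u2 w3 w1 w2]) (use assms in \<open>auto simp: algebra_simps\<close>)
  show R12: "u1*u2+w1*w2 = -1/2" using r12 m by (metis mult_cancel_left mult_minus_right times_divide_eq_right mult.right_neutral mult_pos_pos less_irrefl)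
  show "u2*u3+w2*w3 = -1/2" using r23 m by (metis mult_cancel_left mult_minus_right times_divide_eq_right mult.right_neutral mult_pos_pos less_irrefl)
  show "u3*u1+w3*w1 = -1/2" using r31 m by (metis mult_cancel_left mult_minus_right times_divide_eq_right mult.right_neutral mult_pos_pos less_irrefl)
  define p where "p = u1*w2-w1*u2"
  define q where "q = u2*w3-w2*u3"
  define r where "r = u3*w1-w3*u1"
  have e1: "m2*p = m3*r"
  proof -
    have "u1*(m1*w1+m2*w2+m3*w3) - w1*(m1*u1+m2*u2+m3*u3) = 0" using su sv by simp
    then show ?thesis unfolding p_def r_def by (simp add: algebra_simps)
  qed
  have e2: "m3*q = m1*p"
  proof -
    have "u2*(m1*w1+m2*w2+m3*w3) - w2*(m1*u1+m2*u2+m3*u3) = 0" using su sv by simp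
    then show ?thesis unfolding p_def q_def by (simp add: algebra_simps)
  qed
  have arq: "p+q+r > 0" using ar unfolding p_def q_def r_def by (simp add: algebra_simps)
  have "m3*(p+q+r) = m3*p + m3*q + m3*r" by (simp add: algebra_simps)
  also have "\<dots> = m3*p + m1*p + m2*p" using e1 e2 by simp
  also have "\<dots> = (m1+m2+m3)*p" by (simp add: algebra_simps)
  finally have "m3*(p+q+r) = p" using m(4) by simp
  moreover have "m3*(p+q+r) > 0" using arq m by simp
  ultimately have ppos: "p > 0" by simp
  have lag: "(u1^2+w1^2)*(u2^2+w2^2) = (u1*u2+w1*w2)^2 + p^2"
    unfolding p_def by (simp add: algebra_simps power2_eq_square)
  have "(m1*m2*p)^2 = m1*m2*((m1*(u1^2+w1^2))*(m2*(u2^2+w2^2))) - (m1*m2)^2*(u1*u2+w1*w2)^2"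
  proof -
    have "(m1*m2*p)^2 = (m1*m2)^2*p^2" by (simp add: power_mult_distrib)
    also have "p^2 = (u1^2+w1^2)*(u2^2+w2^2) - (u1*u2+w1*w2)^2" using lag by simp
    finally show ?thesis by (simp add: algebra_simps power2_eq_square)
  qed
  also have "\<dots> = m1*m2*m3/4"
  proof -
    have M3: "m3 = 1-m1-m2" using m(4) by linarith
    show ?thesis by (simp only: n1 n2 R12) (simp add: M3 field_simps power2_eq_square)
  qed
  finally have sq: "(m1*m2*p)^2 = m1*m2*m3/4" .
  have pp: "m1*m2*p > 0" using m ppos by simp
  have "m1*m2*p = sqrt(m1*m2*m3)/2"
  proof -
    have "sqrt((m1*m2*p)^2) = sqrt(m1*m2*m3/4)" by (simp only: sq)
    then show ?thesis using pp by (simp add: real_sqrt_divide)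
  qed
  then show P: "m1*m2*(u1*w2-w1*u2) = sqrt(m1*m2*m3)/2" unfolding p_def .
  show "m2*m3*(u2*w3-w2*u3) = sqrt(m1*m2*m3)/2"
    using P e2 unfolding p_def q_def by (metis mult.assoc mult.commute)
  show "m3*m1*(u3*w1-w3*u1) = sqrt(m1*m2*m3)/2"
    using P e1 unfolding p_def r_def by (metis mult.assoc mult.commute)
qed

lemma ident:
  fixes m1 m2 m3 x1 x2 x3 y1 y2 y3 u1 u2 u3 w1 w2 w3 S :: real
  assumes m: "m1+m2+m3 = 1"
    and sx: "m1*x1+m2*x2+m3*x3 = 0" and sy: "m1*y1+m2*y2+m3*y3 = 0"
    and n1: "m1*(u1^2+w1^2) = (1-m1)/2" and n2: "m2*(u2^2+w2^2) = (1-m2)/2"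
    and n3: "m3*(u3^2+w3^2) = (1-m3)/2"
    and r12: "u1*u2+w1*w2 = -1/2" and r23: "u2*u3+w2*w3 = -1/2" and r31: "u3*u1+w3*w1 = -1/2"
    and q12: "m1*m2*(u1*w2-w1*u2) = S/2" and q23: "m2*m3*(u2*w3-w2*u3) = S/2"
    and q31: "m3*m1*(u3*w1-w3*u1) = S/2"
  shows "2*((m1*(x1*u1+y1*w1)+m2*(x2*u2+y2*w2)+m3*(x3*u3+y3*w3))^2 + (m1*(x1*w1-y1*u1)+m2*(x2*w2-y2*u2)+m3*(x3*w3-y3*u3))^2)
    = (m1*(x1^2+y1^2)+m2*(x2^2+y2^2)+m3*(x3^2+y3^2)) + 2*S*((x2-x1)*(y3-y1)-(y2-y1)*(x3-x1))"
proof -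
  have "(m1*(x1*u1+y1*w1)+m2*(x2*u2+y2*w2)+m3*(x3*u3+y3*w3))^2 + (m1*(x1*w1-y1*u1)+m2*(x2*w2-y2*u2)+m3*(x3*w3-y3*u3))^2
   = m1*(x1*x1+y1*y1)*(m1*(u1^2+w1^2)) + m2*(x2*x2+y2*y2)*(m2*(u2^2+w2^2)) + m3*(x3*x3+y3*y3)*(m3*(u3^2+w3^2))
    + 2*m1*m2*(x1*x2+y1*y2)*(u1*u2+w1*w2) + 2*m2*m3*(x2*x3+y2*y3)*(u2*u3+w2*w3) + 2*m3*m1*(x3*x1+y3*y1)*(u3*u1+w3*w1)
    + 2*(x1*y2-y1*x2)*(m1*m2*(u1*w2-w1*u2)) + 2*(x2*y3-y2*x3)*(m2*m3*(u2*w3-w2*u3)) + 2*(x3*y1-y3*x1)*(m3*m1*(u3*w1-w3*u1))"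
    by (simp add: algebra_simps power2_eq_square)
  also have "\<dots> = m1*(x1*x1+y1*y1)*((1-m1)/2) + m2*(x2*x2+y2*y2)*((1-m2)/2) + m3*(x3*x3+y3*y3)*((1-m3)/2)
    + 2*m1*m2*(x1*x2+y1*y2)*(-1/2) + 2*m2*m3*(x2*x3+y2*y3)*(-1/2) + 2*m3*m1*(x3*x1+y3*y1)*(-1/2)
    + 2*(x1*y2-y1*x2)*(S/2) + 2*(x2*y3-y2*x3)*(S/2) + 2*(x3*y1-y3*x1)*(S/2)"
    by (simp only: n1 n2 n3 r12 r23 r31 q12 q23 q31)
  also have "\<dots> = ((m1*(x1^2+y1^2)+m2*(x2^2+y2^2)+m3*(x3^2+y3^2)) - (m1*x1+m2*x2+m3*x3)^2 - (m1*y1+m2*y2+m3*y3)^2)/2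
     + S*((x2-x1)*(y3-y1)-(y2-y1)*(x3-x1))"
    by (simp add: field_simps power2_eq_square)
  finally show ?thesis using m sx sy by simp
qed


theorem mainTheorem15:
  fixes m :: "nat \<Rightarrow> real" and \<delta> n :: "nat \<Rightarrow> complex"
  assumes "\<forall>i\<in>{1..3}. m i > 0"
    and "m 1 + m 2 + m 3 = 1"
    and "is_mtriangle m \<delta>"
    and "\<exists>i\<in>{1..3}. \<delta> i \<noteq> 0"
    and "signed_area \<delta> > 0"
    and "is_north_pole m n"
  shows "cos (2 * shape_dist m \<delta> n)
           = 4 * sqrt (m 1 * m 2 * m 3) * signed_area \<delta> / inertia m \<delta>"
proof -
  have m1: "m 1 > 0" and m2: "m 2 > 0" and m3: "m 3 > 0" using assms(1) by auto
  have msum: "m 1 + m 2 + m 3 = 1" by fact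
  define S where "S = sqrt (m 1 * m 2 * m 3)"
  have tri: "complex_of_real (m 1) * \<delta> 1 + complex_of_real (m 2) * \<delta> 2 + complex_of_real (m 3) * \<delta> 3 = 0"
    using assms(3) unfolding is_mtriangle_def sum3 .
  have sx: "m 1 * Re (\<delta> 1) + m 2 * Re (\<delta> 2) + m 3 * Re (\<delta> 3) = 0"
    using arg_cong[OF tri, of Re] by simp
  have sy: "m 1 * Im (\<delta> 1) + m 2 * Im (\<delta> 2) + m 3 * Im (\<delta> 3) = 0"
    using arg_cong[OF tri, of Im] by simp
  have np: "is_mtriangle m n" "signed_area n > 0" "\<forall>j\<in>{1..3}. m j * (cmod (n j))^2 = (1 - m j) / 2"
    using assms(6) unfolding is_north_pole_def by auto
  have ntri: "complex_of_real (m 1) * n 1 + complex_of_real (m 2) * n 2 + complex_of_real (m 3) * n 3 = 0"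
    using np(1) unfolding is_mtriangle_def sum3 .
  have su: "m 1 * Re (n 1) + m 2 * Re (n 2) + m 3 * Re (n 3) = 0"
    using arg_cong[OF ntri, of Re] by simp
  have sw: "m 1 * Im (n 1) + m 2 * Im (n 2) + m 3 * Im (n 3) = 0"
    using arg_cong[OF ntri, of Im] by simp
  have nn: "m j * ((Re (n j))^2 + (Im (n j))^2) = (1 - m j)/2" if "j \<in> {1..3}" for j
    using np(3) that by (simp add: cmod_power2)
  have nn1: "m 1 * ((Re (n 1))^2 + (Im (n 1))^2) = (1 - m 1)/2" by (rule nn) auto
  have nn2: "m 2 * ((Re (n 2))^2 + (Im (n 2))^2) = (1 - m 2)/2" by (rule nn) auto
  have nn3: "m 3 * ((Re (n 3))^2 + (Im (n 3))^2) = (1 - m 3)/2" by (rule nn) auto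
  have nar: "(Re (n 2) - Re (n 1)) * (Im (n 3) - Im (n 1)) - (Im (n 2) - Im (n 1)) * (Re (n 3) - Re (n 1)) > 0"
    using np(2) unfolding signed_area_def by (simp add: algebra_simps)
  note P = pole[OF m1 m2 m3 msum su sw nn1 nn2 nn3 nar, folded S_def]
  define g where "g = (\<Sum>i\<in>{1..3}. complex_of_real (m i) * (cnj (\<delta> i) * n i))"
  have Reg: "Re g = m 1 * (Re (\<delta> 1) * Re (n 1) + Im (\<delta> 1) * Im (n 1)) + m 2 * (Re (\<delta> 2) * Re (n 2) + Im (\<delta> 2) * Im (n 2)) + m 3 * (Re (\<delta> 3) * Re (n 3) + Im (\<delta> 3) * Im (n 3))"
    unfolding g_def sum3 by simp
  have Img: "Im g = m 1 * (Re (\<delta> 1) * Im (n 1) - Im (\<delta> 1) * Re (n 1)) + m 2 * (Re (\<delta> 2) * Im (n 2) - Im (\<delta> 2) * Re (n 2)) + m 3 * (Re (\<delta> 3) * Im (n 3) - Im (\<delta> 3) * Re (n 3))"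
    unfolding g_def sum3 by (simp add: algebra_simps)
  have Id: "inertia m \<delta> = m 1 * ((Re (\<delta> 1))^2 + (Im (\<delta> 1))^2) + m 2 * ((Re (\<delta> 2))^2 + (Im (\<delta> 2))^2) + m 3 * ((Re (\<delta> 3))^2 + (Im (\<delta> 3))^2)"
    unfolding inertia_def sum3 by (simp add: cmod_power2)
  have In: "inertia m n = 1"
    unfolding inertia_def sum3 using nn1 nn2 nn3 msum by (simp add: cmod_power2)
  have Ad: "signed_area \<delta> = ((Re (\<delta> 2) - Re (\<delta> 1)) * (Im (\<delta> 3) - Im (\<delta> 1)) - (Im (\<delta> 2) - Im (\<delta> 1)) * (Re (\<delta> 3) - Re (\<delta> 1))) / 2"
    unfolding signed_area_def by (simp add: algebra_simps)
  have key: "2 * (cmod g)^2 = inertia m \<delta> + 4 * S * signed_area \<delta>"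
    unfolding cmod_power2 Reg Img Id Ad
    using ident[OF msum sx sy nn1 nn2 nn3 P] by simp
  have Ipos: "inertia m \<delta> > 0"
  proof -
    obtain i where i: "i \<in> {1..3}" "\<delta> i \<noteq> 0" using assms(4) by auto
    have "m i * (cmod (\<delta> i))^2 > 0" using i assms(1) by simp
    moreover have "\<forall>j\<in>{1..3}. m j * (cmod (\<delta> j))^2 \<ge> 0" using assms(1) by (simp add: less_imp_le)
    ultimately have "(\<Sum>j\<in>{1..3}. m j * (cmod (\<delta> j))^2) > 0"
      using i by (intro sum_pos2[of _ i]) auto
    then show ?thesis unfolding inertia_def .
  qed
  have CS: "(cmod g)^2 \<le> inertia m \<delta>"
  proof -
    have "cmod g \<le> (\<Sum>i\<in>{1..3}. cmod (complex_of_real (m i) * (cnj (\<delta> i) * n i)))"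
      unfolding g_def by (rule norm_sum)
    also have "\<dots> = (\<Sum>i\<in>{1..3}. (sqrt (m i) * cmod (\<delta> i)) * (sqrt (m i) * cmod (n i)))"
      using assms(1) by (intro sum.cong) (auto simp: norm_mult less_imp_le)
    finally have le: "cmod g \<le> (\<Sum>i\<in>{1..3}. (sqrt (m i) * cmod (\<delta> i)) * (sqrt (m i) * cmod (n i)))" .
    have "(cmod g)^2 \<le> (\<Sum>i\<in>{1..3}. (sqrt (m i) * cmod (\<delta> i)) * (sqrt (m i) * cmod (n i)))^2"
      using le by (simp add: power_mono)
    also have "\<dots> \<le> (\<Sum>i\<in>{1..3}. (sqrt (m i) * cmod (\<delta> i))^2) * (\<Sum>i\<in>{1..3}. (sqrt (m i) * cmod (n i))^2)"
      unfolding sum3 by (rule cs3)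
    also have "\<dots> = inertia m \<delta> * inertia m n"
      unfolding inertia_def using assms(1) by (simp add: power_mult_distrib less_imp_le)
    finally show ?thesis using In by simp
  qed
  define s where "s = sqrt (inertia m \<delta>)"
  have spos: "s > 0" unfolding s_def using Ipos by simp
  have gs: "cmod g \<le> s" unfolding s_def using CS real_le_rsqrt by blast
  have kin: "kin_inner m \<delta> (\<lambda>i. u * n i) = Re (u * g)" for u
    unfolding kin_inner_def g_def sum3 by (simp add: algebra_simps)
  have den: "sqrt (inertia m \<delta> * inertia m n) = s" unfolding s_def In by simp
  define c where "c = cmod g / s"
  have c01: "0 \<le> c" "c \<le> 1" unfolding c_def using gs spos by auto
  have Seq: "(\<lambda>u. config_sphere_dist m \<delta> (\<lambda>i. u * n i)) ` {u. cmod u = 1} = (\<lambda>u. arccos (Re (u * g) / s)) ` {u. cmod u = 1}"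
  proof (rule image_cong[OF refl])
    fix u :: complex assume "u \<in> {u. cmod u = 1}"
    then have u1: "cmod u = 1" by simp
    have iu: "inertia m (\<lambda>i. u * n i) = inertia m n"
      unfolding inertia_def by (simp add: norm_mult u1)
    show "config_sphere_dist m \<delta> (\<lambda>i. u * n i) = arccos (Re (u * g) / s)"
      unfolding config_sphere_dist_def kin iu den by (rule refl)
  qed
  have SD: "shape_dist m \<delta> n = arccos c"
    unfolding shape_dist_def Seq
  proof (rule cInf_eq_minimum)
    define u0 where "u0 = (if g = 0 then 1 else cnj g / complex_of_real (cmod g))"
    have "cmod u0 = 1" unfolding u0_def by (simp add: norm_divide)
    moreover have "Re (u0 * g) = cmod g"
    proof (cases "g = 0")
      case True then show ?thesis unfolding u0_def by simp
    next
      case False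
      have e: "cnj g * g = complex_of_real ((cmod g)^2)" using complex_norm_square[of g] by (simp only: mult.commute)
      have "u0 * g = (cnj g * g) / complex_of_real (cmod g)" unfolding u0_def using False by simp
      also have "\<dots> = complex_of_real ((cmod g)^2 / cmod g)" unfolding e by simp
      also have "\<dots> = complex_of_real (cmod g)" using False by (simp add: power2_eq_square)
      finally show ?thesis by simp
    qed
    ultimately show "arccos c \<in> (\<lambda>u. arccos (Re (u * g) / s)) ` {u. cmod u = 1}"
      unfolding c_def by force
  next
    fix x assume "x \<in> (\<lambda>u. arccos (Re (u * g) / s)) ` {u. cmod u = 1}"
    then obtain u where u: "cmod u = 1" "x = arccos (Re (u * g) / s)" by auto
    have "\<bar>Re (u * g)\<bar> \<le> cmod g" using abs_Re_le_cmod[of "u*g"] u(1) by (simp add: norm_mult)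
    then have "-1 \<le> Re (u * g) / s" "Re (u * g) / s \<le> c" using gs spos unfolding c_def
      by (auto simp: divide_le_eq le_divide_eq divide_right_mono)
    then show "arccos c \<le> x" unfolding u(2) using c01 by (intro arccos_le_arccos) auto
  qed
  have "cos (2 * shape_dist m \<delta> n) = 2 * c^2 - 1"
    unfolding SD cos_double_cos using c01 by simp
  also have "\<dots> = (2 * (cmod g)^2 - inertia m \<delta>) / inertia m \<delta>"
    unfolding c_def s_def using Ipos by (simp add: power_divide field_simps)
  also have "\<dots> = 4 * S * signed_area \<delta> / inertia m \<delta>" using key by simp
  finally show ?thesis unfolding S_def .
qed

end
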